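(* Let $S$ be a finitely generated left cancellative semigroup with no infinite $\mathcal{R}$-classes. Suppose that for some finite generating set $A$ of $S$, the right Cayley graph $\Gamma_r(S,A)$ contains a ray $\mathbf{r}$ and there is an element $s\in S$ such that there are (directed) paths in $\Gamma_r(S,A)$ from infinitely many vertices of $\mathbf{r}$ to $s$. Then $\Omega S$ is infinite.
   Context: $S$ is left cancellative if $ax=ay$ implies $x=y$. $\mathcal{R}$ is Green's relation: $x\,\mathcal{R}\,y$ iff $xS^1=yS^1$. A digraph on $\Omega$ is a subset $\Gamma\subseteq\Omega\times\Omega$. A path is a sequence of pairwise distinct vertices $(v_0,v_1,\ldots)$ with $(v_i,v_{i+1})\in\Gamma$ (length 0 allowed); a ray is an infinite path; an anti-ray is an infinite sequence of distinct vertices with $(v_{i+1},v_i)\in\Gamma$. For infinite $\Sigma',\Sigma\subseteq\Omega$, $\Sigma'\preccurlyeq\Sigma$ means there are infinitely many pairwise vertex-disjoint paths from vertices of $\Sigma'$ to vertices of $\Sigma$. On rays and anti-rays $\preccurlyeq$ is a preorder with associated equivalence $\approx$; the ends are the $\approx$-classes of rays and anti-rays, and $\Omega\Gamma$ is the poset of ends. The right Cayley graph $\Gamma_r(S,A)$ has vertex set $S$ and edges $(x,xa)$, $x\in S$, $a\in A$. For finitely generated $S$, $\Omega S:=\Omega\Gamma_r(S,A)$ for any finite generating set $A$ (well defined up to isomorphism). *)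

theory Defs
  imports Main
begin

text \<open>Semigroups are modelled by the type class semigroup_mult: the semigroup S is
the whole (nonempty) carrier type.\<close>

definition left_cancellative :: "'a::semigroup_mult itself \<Rightarrow> bool" where
  "left_cancellative _ \<longleftrightarrow> (\<forall>a x y::'a. a * x = a * y \<longrightarrow> x = y)"

inductive_set sg_gen :: "'a::semigroup_mult set \<Rightarrow> 'a set" for A where
  base: "a \<in> A \<Longrightarrow> a \<in> sg_gen A"
| mult: "x \<in> sg_gen A \<Longrightarrow> y \<in> sg_gen A \<Longrightarrow> x * y \<in> sg_gen A"

definition generates :: "'a::semigroup_mult set \<Rightarrow> bool" where
  "generates A \<longleftrightarrow> sg_gen A = UNIV"

definition right_ideal1 :: "'a::semigroup_mult \<Rightarrow> 'a set" where
  "right_ideal1 x = insert x {x * s | s. True}"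

definition green_R :: "'a::semigroup_mult \<Rightarrow> 'a \<Rightarrow> bool" where
  "green_R x y \<longleftrightarrow> right_ideal1 x = right_ideal1 y"

definition R_class :: "'a::semigroup_mult \<Rightarrow> 'a set" where
  "R_class x = {y. green_R x y}"

definition is_path :: "('v \<times> 'v) set \<Rightarrow> 'v list \<Rightarrow> bool" where
  "is_path G p \<longleftrightarrow> p \<noteq> [] \<and> distinct p \<and> (\<forall>i. Suc i < length p \<longrightarrow> (p ! i, p ! Suc i) \<in> G)"

definition is_ray :: "('v \<times> 'v) set \<Rightarrow> (nat \<Rightarrow> 'v) \<Rightarrow> bool" where
  "is_ray G r \<longleftrightarrow> inj r \<and> (\<forall>i. (r i, r (Suc i)) \<in> G)"

definition is_antiray :: "('v \<times> 'v) set \<Rightarrow> (nat \<Rightarrow> 'v) \<Rightarrow> bool" where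
  "is_antiray G r \<longleftrightarrow> inj r \<and> (\<forall>i. (r (Suc i), r i) \<in> G)"

definition end_le :: "('v \<times> 'v) set \<Rightarrow> 'v set \<Rightarrow> 'v set \<Rightarrow> bool" where
  "end_le G X Y \<longleftrightarrow> (\<exists>P. infinite P \<and>
      (\<forall>p\<in>P. is_path G p \<and> hd p \<in> X \<and> last p \<in> Y) \<and>
      (\<forall>p\<in>P. \<forall>q\<in>P. p \<noteq> q \<longrightarrow> set p \<inter> set q = {}))"

definition end_equiv :: "('v \<times> 'v) set \<Rightarrow> (nat \<Rightarrow> 'v) \<Rightarrow> (nat \<Rightarrow> 'v) \<Rightarrow> bool" where
  "end_equiv G r s \<longleftrightarrow> end_le G (range r) (range s) \<and> end_le G (range s) (range r)"

definition rays_antirays :: "('v \<times> 'v) set \<Rightarrow> (nat \<Rightarrow> 'v) set" where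
  "rays_antirays G = {r. is_ray G r \<or> is_antiray G r}"

definition ends :: "('v \<times> 'v) set \<Rightarrow> (nat \<Rightarrow> 'v) set set" where
  "ends G = rays_antirays G // {(r, s). r \<in> rays_antirays G \<and> s \<in> rays_antirays G \<and> end_equiv G r s}"

definition right_cayley :: "'a::semigroup_mult set \<Rightarrow> ('a \<times> 'a) set" where
  "right_cayley A = {(x, x * a) | x a. a \<in> A}"

end

theory Submission
  imports Defs
begin

lemma ri_self: "x \<in> right_ideal1 x" by (simp add: right_ideal1_def)
lemma ri_mult: "y \<in> right_ideal1 x \<Longrightarrow> y * w \<in> right_ideal1 x"
  by (auto simp: right_ideal1_def mult.assoc)
lemma ri_trans: "x \<in> right_ideal1 y \<Longrightarrow> y \<in> right_ideal1 z \<Longrightarrow> x \<in> right_ideal1 z"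
proof -
  assume a: "x \<in> right_ideal1 y" and b: "y \<in> right_ideal1 z"
  from b have "y = z \<or> (\<exists>u. y = z * u)" by (auto simp: right_ideal1_def)
  then show ?thesis
  proof
    assume "y = z" then show ?thesis using a by simp
  next
    assume "\<exists>u. y = z * u"
    then obtain u where u: "y = z * u" by blast
    from a have "x = y \<or> (\<exists>v. x = y * v)" by (auto simp: right_ideal1_def)
    then show ?thesis
    proof
      assume "x = y" then show ?thesis using u by (auto simp: right_ideal1_def)
    next
      assume "\<exists>v. x = y * v"
      then obtain v where "x = y * v" by blast
      then have "x = z * (u * v)" using u by (simp add: mult.assoc)
      then show ?thesis by (auto simp: right_ideal1_def)
    qed
  qed
qed
lemma ri_eq: "x \<in> right_ideal1 y \<Longrightarrow> y \<in> right_ideal1 x \<Longrightarrow> right_ideal1 x = right_ideal1 y"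
  by (metis ri_trans subsetI subset_antisym)

lemma ri_cancel:
  assumes "left_cancellative TYPE('a::semigroup_mult)" "(x::'a) * a \<in> right_ideal1 (x * b)"
  shows "a \<in> right_ideal1 b"
proof -
  have lc: "\<And>c u v::'a. c * u = c * v \<Longrightarrow> u = v" using assms(1) unfolding left_cancellative_def by blast
  from assms(2) have "x * a = x * b \<or> (\<exists>w. x * a = x * (b * w))"
    by (auto simp: right_ideal1_def mult.assoc)
  then show ?thesis using lc by (auto simp: right_ideal1_def)
qed

lemma path_ri:
  assumes "is_path (right_cayley A) p"
  shows "last p \<in> right_ideal1 (hd p)"
proof -
  have "\<forall>i. i < length p \<longrightarrow> p ! i \<in> right_ideal1 (p ! 0)"
  proof
    fix i show "i < length p \<longrightarrow> p ! i \<in> right_ideal1 (p ! 0)"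
    proof (induction i)
      case 0 then show ?case by (simp add: ri_self)
    next
      case (Suc i)
      show ?case
      proof
        assume h: "Suc i < length p"
        then have "(p ! i, p ! Suc i) \<in> right_cayley A" using assms by (simp add: is_path_def)
        then obtain a where "p ! Suc i = p ! i * a" by (auto simp: right_cayley_def)
        then show "p ! Suc i \<in> right_ideal1 (p ! 0)" using Suc h ri_mult by auto
      qed
    qed
  qed
  moreover have "p \<noteq> []" using assms by (simp add: is_path_def)
  ultimately show ?thesis by (simp add: last_conv_nth hd_conv_nth)
qed

lemma ray_ri:
  assumes "is_ray (right_cayley A) r"
  shows "i \<le> m \<Longrightarrow> r m \<in> right_ideal1 (r i)"
proof (induction m rule: dec_induct)
  case base then show ?case by (simp add: ri_self)
next
  case (step m)
  from assms have "(r m, r (Suc m)) \<in> right_cayley A" by (simp add: is_ray_def)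
  then obtain a where "r (Suc m) = r m * a" by (auto simp: right_cayley_def)
  then show ?case using step ri_mult by auto
qed

fun spow :: "'a::semigroup_mult \<Rightarrow> nat \<Rightarrow> 'a" where
  "spow s 0 = s"
| "spow s (Suc n) = s * spow s n"

lemma spow_add: "spow s (m + Suc d) = spow s m * spow s d"
  by (induction m) (auto simp: mult.assoc)

lemma spow_s: "\<exists>w. spow s d * y = s * w"
  by (cases d) (auto simp: mult.assoc)

lemma end_equiv_refl:
  assumes "inj t"
  shows "end_equiv G t t"
proof -
  have "end_le G (range t) (range t)"
    unfolding end_le_def
  proof (intro exI conjI)
    show "infinite (range (\<lambda>n. [t n]))"
      using assms by (metis (no_types, lifting) finite_imageD infinite_UNIV_nat inj_def list.inject)
    show "\<forall>p\<in>range (\<lambda>n. [t n]). is_path G p \<and> hd p \<in> range t \<and> last p \<in> range t"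
      by (auto simp: is_path_def)
    show "\<forall>p\<in>range (\<lambda>n. [t n]). \<forall>q\<in>range (\<lambda>n. [t n]). p \<noteq> q \<longrightarrow> set p \<inter> set q = {}"
      by auto
  qed
  then show ?thesis by (simp add: end_equiv_def)
qed

theorem mainTheorem11:
  fixes A :: "'a::semigroup_mult set" and r :: "nat \<Rightarrow> 'a" and s :: 'a
  assumes "left_cancellative TYPE('a)"
    and "\<forall>x::'a. finite (R_class x)"
    and "finite A" and "generates A"
    and "is_ray (right_cayley A) r"
    and "infinite {v \<in> range r. \<exists>p. is_path (right_cayley A) p \<and> hd p = v \<and> last p = s}"
  shows "infinite (ends (right_cayley A))"
proof -
  let ?G = "right_cayley A"
  have lc: "\<And>c u v::'a. c * u = c * v \<Longrightarrow> u = v" using assms(1) unfolding left_cancellative_def by blast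
  have rinj: "inj r" using assms(5) by (simp add: is_ray_def)
  let ?V = "{v \<in> range r. \<exists>p. is_path ?G p \<and> hd p = v \<and> last p = s}"
  have sbelow: "s \<in> right_ideal1 (r m)" for m
  proof -
    have "finite (r ` {..<m})" by simp
    then have "\<not> ?V \<subseteq> r ` {..<m}" using assms(6) finite_subset by auto
    then obtain i where "r i \<in> ?V" "\<not> i < m" by auto
    then obtain p where "is_path ?G p" "hd p = r i" "last p = s" by auto
    then have "s \<in> right_ideal1 (r i)" using path_ri by metis
    moreover have "r i \<in> right_ideal1 (r m)" using ray_ri[OF assms(5)] \<open>\<not> i < m\<close> by simp
    ultimately show ?thesis using ri_trans by blast
  qed
  have notbelow: "r i \<notin> right_ideal1 s" for i
  proof
    assume h: "r i \<in> right_ideal1 s"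
    have "r ` {i..} \<subseteq> R_class (r i)"
    proof
      fix y assume "y \<in> r ` {i..}"
      then obtain m where m: "m \<ge> i" "y = r m" by auto
      have "r m \<in> right_ideal1 (r i)" using ray_ri[OF assms(5) m(1)] .
      moreover have "r i \<in> right_ideal1 (r m)" using h sbelow ri_trans by blast
      ultimately have "right_ideal1 (r i) = right_ideal1 (r m)" by (rule ri_eq[rotated])
      then show "y \<in> R_class (r i)" using m by (simp add: R_class_def green_R_def)
    qed
    moreover have "infinite (r ` {i..})"
      using rinj by (meson finite_imageD infinite_Ici inj_on_subset subset_UNIV)
    ultimately show False using assms(2) finite_subset by metis
  qed
  define t where "t k = (\<lambda>n. spow s k * r n)" for k
  have tray: "is_ray ?G (t k)" for k
    unfolding is_ray_def
  proof
    show "inj (t k)" unfolding t_def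
    proof (rule injI)
      fix x y assume "spow s k * r x = spow s k * r y"
      then have "r x = r y" by (rule lc)
      then show "x = y" using rinj by (simp add: inj_eq)
    qed
    show "\<forall>i. (t k i, t k (Suc i)) \<in> ?G"
    proof
      fix i
      from assms(5) have "(r i, r (Suc i)) \<in> ?G" by (simp add: is_ray_def)
      then obtain a where "a \<in> A" "r (Suc i) = r i * a" by (auto simp: right_cayley_def)
      then show "(t k i, t k (Suc i)) \<in> ?G" unfolding t_def right_cayley_def
        by (auto simp: mult.assoc)
    qed
  qed
  have nopath: "\<not> end_le ?G (range (t l)) (range (t k))" if kl: "k < l" for k l
  proof
    assume "end_le ?G (range (t l)) (range (t k))"
    then obtain P where P: "infinite P" "\<forall>p\<in>P. is_path ?G p \<and> hd p \<in> range (t l) \<and> last p \<in> range (t k)"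
      unfolding end_le_def by blast
    then have "P \<noteq> {}" using infinite_imp_nonempty by blast
    then obtain p where "p \<in> P" by blast
    then have "is_path ?G p" "hd p \<in> range (t l)" "last p \<in> range (t k)"
      using P by auto
    then have pr: "last p \<in> right_ideal1 (hd p)" using path_ri by blast
    obtain i where i: "last p = t k i" using \<open>last p \<in> range (t k)\<close> by blast
    obtain j where j: "hd p = t l j" using \<open>hd p \<in> range (t l)\<close> by blast
    obtain d where "l = Suc (k + d)" using less_imp_Suc_add[OF kl] by blast
    then have l: "l = k + Suc d" by simp
    have "spow s l = spow s k * spow s d" using spow_add[of s k d] l by simp
    then have "t l j = spow s k * (spow s d * r j)" by (simp add: t_def mult.assoc)
    then have "spow s k * r i \<in> right_ideal1 (spow s k * (spow s d * r j))"
      using pr i j by (simp add: t_def)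
    then have "r i \<in> right_ideal1 (spow s d * r j)" by (rule ri_cancel[OF assms(1)])
    moreover obtain w where "spow s d * r j = s * w" using spow_s by blast
    ultimately have "r i \<in> right_ideal1 (s * w)" by simp
    moreover have "s * w \<in> right_ideal1 s" using ri_mult ri_self by blast
    ultimately have "r i \<in> right_ideal1 s" using ri_trans by blast
    then show False using notbelow by blast
  qed
  define R where "R = {(x, y). x \<in> rays_antirays ?G \<and> y \<in> rays_antirays ?G \<and> end_equiv ?G x y}"
  have tin: "t k \<in> rays_antirays ?G" for k using tray by (simp add: rays_antirays_def)
  have cls: "R `` {t k} \<in> ends ?G" for k
    unfolding ends_def R_def[symmetric] using tin by (auto simp: quotient_def)
  have injc: "inj (\<lambda>k. R `` {t k})"
  proof (rule injI)
    fix k l assume eq: "R `` {t k} = R `` {t l}"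
    have "inj (t l)" using tray[of l] by (simp add: is_ray_def)
    then have "end_equiv ?G (t l) (t l)" by (rule end_equiv_refl)
    then have "t l \<in> R `` {t l}" using tin by (simp add: R_def)
    then have "t l \<in> R `` {t k}" using eq by simp
    then have "end_equiv ?G (t k) (t l)" by (simp add: R_def)
    then show "k = l" using nopath[of k l] nopath[of l k] unfolding end_equiv_def
      by (cases k l rule: linorder_cases) auto
  qed
  have "range (\<lambda>k. R `` {t k}) \<subseteq> ends ?G" using cls by auto
  moreover have "infinite (range (\<lambda>k. R `` {t k}))" using injc finite_imageD by blast
  ultimately show ?thesis using finite_subset by blast
qed

end
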